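(* Let $\omega\ge0$ and let $\mathcal{T}$ be the scheme on $\mathcal{M}$ defined by $$\mathcal{T}(\mathbf{p})_{2i}=p_i,\qquad \mathcal{T}(\mathbf{p})_{2i+1}=M_{1/2}\big(M_{-2\omega}(p_i,p_{i-1}),\,M_{-2\omega}(p_{i+1},p_{i+2})\big),\quad i\in\mathbb{Z}.$$ Then $\delta(\mathcal{T}(\mathbf{p}))\le(4\omega+\tfrac12)\,\delta(\mathbf{p})$ for all manifold data $\mathbf{p}$. Consequently, for $0\le\omega<\tfrac18$ the scheme has a contractivity factor $\mu=4\omega+\tfrac12<1$ and is convergent (in particular for $\omega=\tfrac1{16}$, with $\mu=\tfrac34$).
   Context: $\mathcal{M}$ is a geodesically complete connected Riemannian manifold with distance $d$. $M_t(p_0,p_1)$ is the geodesic average: the point at parameter $t$ on a fixed minimal geodesic $\gamma$ with $\gamma(0)=p_0,\gamma(1)=p_1$, extended beyond $[0,1]$ for $t$ near $[0,1]$ (assumed defined for $t=-2\omega$), satisfying $d(p_0,M_t(p_0,p_1))=|t|d(p_0,p_1)$ and $d(M_t(p_0,p_1),p_1)=|1-t|d(p_0,p_1)$. Data $\mathbf{p}=(p_i)_{i\in\mathbb{Z}}$, $\delta(\mathbf{p})=\sup_id(p_i,p_{i+1})<\infty$. This scheme is the adaptation (via the symmetric geodesic inductive mean) of the linear 4-point scheme $f_{2i}\mapsto f_i$, $f_{2i+1}\mapsto-\omega(f_{i-1}+f_{i+2})+(\tfrac12+\omega)(f_i+f_{i+1})$. Convergence means: for every data $\mathbf{p}$ the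 curves $\mathrm{PG}_k(\mathcal{T}^k(\mathbf{p}))$ converge uniformly on $\mathbb{R}$, where $\mathrm{PG}_k(\mathbf{q})(t)=M_{2^kt-n}(q_n,q_{n+1})$ for $t\in[2^{-k}n,2^{-k}(n+1))$. *)

theory Defs
  imports "HOL-Analysis.Analysis"
begin

text \<open>Abstract model of the manifold setting: a complete metric space (a geodesically
complete Riemannian manifold is complete by Hopf--Rinow) together with a geodesic
average M t p0 p1, which for t in the interval [a,1] runs along a fixed minimal
constant-speed geodesic from p0 (t = 0) to p1 (t = 1).\<close>

definition geodesic_average :: "(real \<Rightarrow> 'a::metric_space \<Rightarrow> 'a \<Rightarrow> 'a) \<Rightarrow> real \<Rightarrow> bool" where
  "geodesic_average M a \<longleftrightarrow>
     (\<forall>p q. M 0 p q = p \<and> M 1 p q = q \<and>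
        (\<forall>s\<in>{a..1}. \<forall>t\<in>{a..1}. dist (M s p q) (M t p q) = \<bar>s - t\<bar> * dist p q))"

definition delta :: "(int \<Rightarrow> 'a::metric_space) \<Rightarrow> real" where
  "delta p = (SUP i. dist (p i) (p (i + 1)))"

definition bounded_diff :: "(int \<Rightarrow> 'a::metric_space) \<Rightarrow> bool" where
  "bounded_diff p \<longleftrightarrow> bdd_above (range (\<lambda>i. dist (p i) (p (i + 1))))"

definition scheme :: "(real \<Rightarrow> 'a \<Rightarrow> 'a \<Rightarrow> 'a) \<Rightarrow> real \<Rightarrow> (int \<Rightarrow> 'a) \<Rightarrow> int \<Rightarrow> 'a" where
  "scheme M \<omega> p j =
     (if even j then p (j div 2)
      else (let i = j div 2 in
            M (1/2) (M (-2*\<omega>) (p i) (p (i - 1))) (M (-2*\<omega>) (p (i + 1)) (p (i + 2)))))"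

definition PG :: "(real \<Rightarrow> 'a \<Rightarrow> 'a \<Rightarrow> 'a) \<Rightarrow> nat \<Rightarrow> (int \<Rightarrow> 'a) \<Rightarrow> real \<Rightarrow> 'a" where
  "PG M k q t = (let n = \<lfloor>2 ^ k * t\<rfloor> in M (2 ^ k * t - of_int n) (q n) (q (n + 1)))"

definition convergent_scheme ::
  "(real \<Rightarrow> 'a::metric_space \<Rightarrow> 'a \<Rightarrow> 'a) \<Rightarrow> ((int \<Rightarrow> 'a) \<Rightarrow> int \<Rightarrow> 'a) \<Rightarrow> bool" where
  "convergent_scheme M T \<longleftrightarrow>
     (\<forall>p. bounded_diff p \<longrightarrow>
        (\<exists>F. \<forall>\<epsilon>>0. \<exists>K. \<forall>k\<ge>K. \<forall>t. dist (PG M k ((T ^^ k) p) t) (F t) < \<epsilon>))"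

end

theory Submission
  imports Defs
begin

lemma ga_facts:
  assumes "\<omega> \<ge> 0" and "geodesic_average M (-2 * \<omega>)"
  shows "dist (M (-2*\<omega>) a b) a = 2*\<omega>*dist a b"
    and "dist (M (1/2) a b) a = dist a b / 2"
    and "dist (M (1/2) a b) b = dist a b / 2"
    and "0 \<le> s \<Longrightarrow> s \<le> 1 \<Longrightarrow> dist (M s a b) a \<le> dist a b"
proof -
  have g: "\<And>s t. s\<in>{-2*\<omega>..1} \<Longrightarrow> t\<in>{-2*\<omega>..1} \<Longrightarrow> dist (M s a b) (M t a b) = \<bar>s - t\<bar> * dist a b"
    and m0: "M 0 a b = a" and m1: "M 1 a b = b"
    using assms(2) unfolding geodesic_average_def by auto
  show "dist (M (-2*\<omega>) a b) a = 2*\<omega>*dist a b"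
    using g[of "-2*\<omega>" 0] m0 assms(1) by auto
  show "dist (M (1/2) a b) a = dist a b / 2"
    using g[of "1/2" 0] m0 assms(1) by auto
  show "dist (M (1/2) a b) b = dist a b / 2"
    using g[of "1/2" 1] m1 assms(1) by auto
  assume "0 \<le> s" "s \<le> 1"
  then have "dist (M s a b) a = s * dist a b"
    using g[of s 0] m0 assms(1) by auto
  also have "\<dots> \<le> dist a b" using mult_right_mono[of s 1 "dist a b"] \<open>s \<le> 1\<close> by simp
  finally show "dist (M s a b) a \<le> dist a b" .
qed

lemma step_bound:
  fixes M :: "real \<Rightarrow> 'a::metric_space \<Rightarrow> 'a \<Rightarrow> 'a"
  assumes w: "\<omega> \<ge> 0" and ga: "geodesic_average M (-2 * \<omega>)"
    and c: "\<And>i. dist (q i) (q (i+1)) \<le> c"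
  shows "dist (scheme M \<omega> q j) (scheme M \<omega> q (j+1)) \<le> (4*\<omega> + 1/2) * c"
proof -
  note F = ga_facts[OF w ga]
  have cc: "\<And>i. dist (q (i+1)) (q i) \<le> c" using c by (simp add: dist_commute)
  have c1: "\<And>i. dist (q i) (q (i - 1)) \<le> c" using cc[of "i - 1" for i] by simp
  define i where "i = j div 2"
  define A where "A = M (-2*\<omega>) (q i) (q (i - 1))"
  define B where "B = M (-2*\<omega>) (q (i + 1)) (q (i + 2))"
  define X where "X = M (1/2) A B"
  have dA: "dist A (q i) \<le> 2*\<omega>*c"
    unfolding A_def F(1) using c1[of i] w by (simp add: mult_left_mono)
  have dB: "dist B (q (i+1)) \<le> 2*\<omega>*c"
    unfolding B_def F(1) using c[of "i+1"] w by (simp add: mult_left_mono add.assoc)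
  have dAB: "dist A B \<le> (4*\<omega>+1)*c"
  proof -
    have "dist A B \<le> dist A (q i) + dist (q i) (q (i+1)) + dist (q (i+1)) B"
      using dist_triangle[of A B "q i"] dist_triangle[of "q i" B "q (i+1)"] by linarith
    then show ?thesis using dA dB c[of i] by (simp add: dist_commute algebra_simps)
  qed
  have XA: "dist X A = dist A B / 2" unfolding X_def F(2) ..
  have XB: "dist X B = dist A B / 2" unfolding X_def F(3) ..
  have "dist (q i) X \<le> (4*\<omega> + 1/2) * c"
  proof -
    have "dist (q i) X \<le> dist (q i) A + dist A X" by (rule dist_triangle)
    then show ?thesis using dA dAB XA by (simp add: dist_commute algebra_simps)
  qed
  moreover have "dist X (q (i+1)) \<le> (4*\<omega> + 1/2) * c"
  proof -
    have "dist X (q (i+1)) \<le> dist X B + dist B (q (i+1))" by (rule dist_triangle)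
    then show ?thesis using dB dAB XB by (simp add: dist_commute algebra_simps)
  qed
  moreover have "even j \<Longrightarrow> scheme M \<omega> q j = q i \<and> scheme M \<omega> q (j+1) = X"
    unfolding scheme_def X_def A_def B_def i_def by (auto simp: Let_def)
  moreover have "odd j \<Longrightarrow> scheme M \<omega> q j = X \<and> scheme M \<omega> q (j+1) = q (i+1)"
  proof -
    assume "odd j"
    then have "(j+1) div 2 = i + 1" unfolding i_def by presburger
    then show ?thesis using \<open>odd j\<close> unfolding scheme_def X_def A_def B_def i_def by (auto simp: Let_def)
  qed
  ultimately show ?thesis by (cases "even j") auto
qed


lemma tail_bound:
  fixes f :: "nat \<Rightarrow> 'b \<Rightarrow> 'a::metric_space"
  assumes mu: "0 \<le> \<mu>" "\<mu> < 1" and st: "\<And>k t. dist (f k t) (f (Suc k) t) \<le> B * \<mu>^k"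
  shows "dist (f k t) (f (k+j) t) \<le> B * (\<mu>^k - \<mu>^(k+j)) / (1 - \<mu>)"
proof (induction j)
  case 0
  then show ?case by simp
next
  case (Suc j)
  have "dist (f k t) (f (k + Suc j) t) \<le> dist (f k t) (f (k+j) t) + dist (f (k+j) t) (f (Suc (k+j)) t)"
    by (simp add: dist_triangle)
  also have "\<dots> \<le> B * (\<mu>^k - \<mu>^(k+j)) / (1 - \<mu>) + B * \<mu>^(k+j)"
    using Suc st[of "k+j" t] by linarith
  also have "\<dots> = B * (\<mu>^k - \<mu>^(k + Suc j)) / (1 - \<mu>)"
    using mu by (simp add: field_simps)
  finally show ?case .
qed

lemma geo_unif:
  fixes f :: "nat \<Rightarrow> 'b \<Rightarrow> 'a::complete_space"
  assumes mu: "0 \<le> \<mu>" "\<mu> < 1" and B: "0 \<le> B"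
    and st: "\<And>k t. dist (f k t) (f (Suc k) t) \<le> B * \<mu>^k"
  shows "\<exists>F. \<forall>\<epsilon>>0. \<exists>K. \<forall>k\<ge>K. \<forall>t. dist (f k t) (F t) < \<epsilon>"
proof -
  have tb: "dist (f k t) (f m t) \<le> B * \<mu>^k / (1 - \<mu>)" if "k \<le> m" for k m t
  proof -
    obtain j where m: "m = k + j" using \<open>k \<le> m\<close> le_Suc_ex by blast
    have "dist (f k t) (f m t) \<le> B * (\<mu>^k - \<mu>^(k+j)) / (1 - \<mu>)"
      unfolding m by (rule tail_bound[OF mu st])
    also have "\<dots> \<le> B * \<mu>^k / (1 - \<mu>)"
      using mu B by (intro divide_right_mono mult_left_mono) auto
    finally show ?thesis .
  qed
  have "uniformly_Cauchy_on UNIV f"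
    unfolding uniformly_Cauchy_on_def
  proof (intro allI impI)
    fix e :: real assume e: "e > 0"
    have "e * (1 - \<mu>) / (2 * (B + 1)) > 0" using e mu B by auto
    then obtain K where K: "\<mu>^K < e * (1 - \<mu>) / (2 * (B + 1))"
      using real_arch_pow_inv mu by blast
    have key: "B * \<mu>^K / (1 - \<mu>) < e / 2"
    proof -
      have "B * \<mu>^K \<le> (B+1) * \<mu>^K" using mu by (intro mult_right_mono) auto
      also have "\<dots> < (B+1) * (e * (1 - \<mu>) / (2 * (B + 1)))"
        using K B by (intro mult_strict_left_mono) auto
      also have "\<dots> = e / 2 * (1 - \<mu>)" using B by (simp add: field_simps)
      finally show ?thesis using mu by (simp add: field_simps)
    qed
    show "\<exists>M. \<forall>x\<in>UNIV. \<forall>m\<ge>M. \<forall>n\<ge>M. dist (f m x) (f n x) < e"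
    proof (intro exI ballI allI impI)
      fix x m n assume "K \<le> m" "K \<le> n"
      have "dist (f m x) (f n x) \<le> dist (f K x) (f m x) + dist (f K x) (f n x)"
        by (rule dist_triangle3)
      also have "\<dots> \<le> B * \<mu>^K / (1 - \<mu>) + B * \<mu>^K / (1 - \<mu>)"
        using tb[OF \<open>K \<le> m\<close>] tb[OF \<open>K \<le> n\<close>] by (rule add_mono)
      also have "\<dots> < e" using key by linarith
      finally show "dist (f m x) (f n x) < e" .
    qed
  qed
  then have "uniformly_convergent_on UNIV f" by (rule Cauchy_uniformly_convergent)
  then obtain l where "uniform_limit UNIV f l sequentially"
    unfolding uniformly_convergent_on_def by blast
  then have "\<forall>e>0. \<forall>\<^sub>F n in sequentially. \<forall>x\<in>UNIV. dist (f n x) (l x) < e"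
    by (simp add: uniform_limit_iff)
  then show ?thesis unfolding eventually_sequentially by blast
qed

lemma PG_bound:
  fixes M :: "real \<Rightarrow> 'a::metric_space \<Rightarrow> 'a \<Rightarrow> 'a"
  assumes w: "\<omega> \<ge> 0" and ga: "geodesic_average M (-2 * \<omega>)"
    and c: "\<And>i. dist (q i) (q (i+1)) \<le> c"
    and c': "\<And>i. dist (scheme M \<omega> q i) (scheme M \<omega> q (i+1)) \<le> c'"
  shows "dist (PG M k q t) (PG M (Suc k) (scheme M \<omega> q) t) \<le> c + 2 * c'"
proof -
  note F = ga_facts[OF w ga]
  define x where "x = 2^k * t"
  define n where "n = \<lfloor>x\<rfloor>"
  define m where "m = \<lfloor>2 * x\<rfloor>"
  define T where "T = scheme M \<omega> q"
  have P1: "PG M k q t = M (x - of_int n) (q n) (q (n+1))"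
    unfolding PG_def x_def n_def by (simp add: Let_def)
  have P2: "PG M (Suc k) T t = M (2*x - of_int m) (T m) (T (m+1))"
    unfolding PG_def x_def m_def by (simp add: Let_def mult.assoc)
  have "of_int n \<le> x" "x < of_int n + 1" unfolding n_def by linarith+
  have "of_int m \<le> 2*x" "2*x < of_int m + 1" unfolding m_def by linarith+
  have m1: "2*n \<le> m" unfolding m_def using \<open>of_int n \<le> x\<close> by (simp add: le_floor_iff)
  have m2: "m < 2*n+2" unfolding m_def using \<open>x < of_int n + 1\<close> by (simp add: floor_less_iff)
  have mm: "m = 2*n \<or> m = 2*n+1" using m1 m2 by linarith
  have d1: "dist (PG M k q t) (q n) \<le> c"
    unfolding P1 using F(4)[of "x - of_int n" "q n" "q (n+1)"] c[of n]
      \<open>of_int n \<le> x\<close> \<open>x < of_int n + 1\<close> by linarith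
  have d2: "dist (PG M (Suc k) T t) (T m) \<le> c'"
    unfolding P2 using F(4)[of "2*x - of_int m" "T m" "T (m+1)"] c'[of m]
      \<open>of_int m \<le> 2*x\<close> \<open>2*x < of_int m + 1\<close> unfolding T_def by linarith
  have Te: "T (2*n) = q n" unfolding T_def scheme_def by simp
  have d3: "dist (T m) (q n) \<le> c'"
  proof (cases "m = 2*n")
    case True
    have "0 \<le> c'" using c'[of 0] zero_le_dist order_trans by blast
    then show ?thesis using Te True by (simp add: T_def)
  next
    case False then have "m = 2*n+1" using mm by blast
    then show ?thesis using Te c'[of "2*n"] by (simp add: T_def dist_commute)
  qed
  have "dist (PG M k q t) (PG M (Suc k) T t) \<le> dist (PG M k q t) (q n) + dist (PG M (Suc k) T t) (q n)"
    by (rule dist_triangle2)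
  also have "\<dots> \<le> c + (c' + c')"
    using d1 d2 d3 dist_triangle[of "PG M (Suc k) T t" "q n" "T m"] by linarith
  finally show ?thesis unfolding T_def by simp
qed


theorem mainTheorem7:
  fixes M :: "real \<Rightarrow> 'a::complete_space \<Rightarrow> 'a \<Rightarrow> 'a" and \<omega> :: real
  assumes "\<omega> \<ge> 0"
    and "geodesic_average M (-2 * \<omega>)"
  shows "(\<forall>p. bounded_diff p \<longrightarrow> delta (scheme M \<omega> p) \<le> (4 * \<omega> + 1/2) * delta p)
         \<and> (\<omega> < 1/8 \<longrightarrow> 4 * \<omega> + 1/2 < 1 \<and> convergent_scheme M (scheme M \<omega>))"
proof -
  note w = assms(1) and ga = assms(2)
  define \<mu> where "\<mu> = 4 * \<omega> + 1/2"
  have pb: "dist (p i) (p (i+1)) \<le> delta p" if "bounded_diff p" for p :: "int \<Rightarrow> 'a" and i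
    using that unfolding bounded_diff_def delta_def by (intro cSUP_upper) auto
  have it: "dist ((scheme M \<omega> ^^ k) p i) ((scheme M \<omega> ^^ k) p (i+1)) \<le> \<mu>^k * delta p"
    if "bounded_diff p" for p :: "int \<Rightarrow> 'a" and k i
  proof (induction k arbitrary: i)
    case 0 then show ?case using pb[OF that] by simp
  next
    case (Suc k)
    have "dist (scheme M \<omega> ((scheme M \<omega> ^^ k) p) i) (scheme M \<omega> ((scheme M \<omega> ^^ k) p) (i+1))
          \<le> \<mu> * (\<mu>^k * delta p)"
      using step_bound[where q="(scheme M \<omega> ^^ k) p", OF w ga Suc.IH] by (simp add: \<mu>_def)
    then show ?case by (simp add: mult.assoc)
  qed
  have P1: "\<forall>p. bounded_diff p \<longrightarrow> delta (scheme M \<omega> p) \<le> (4 * \<omega> + 1/2) * delta p"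
  proof (intro allI impI)
    fix p :: "int \<Rightarrow> 'a" assume b: "bounded_diff p"
    show "delta (scheme M \<omega> p) \<le> (4 * \<omega> + 1/2) * delta p"
      unfolding delta_def[of "scheme M \<omega> p"]
      by (rule cSUP_least) (auto intro: step_bound[where q=p, OF w ga pb[OF b]])
  qed
  have P2: "convergent_scheme M (scheme M \<omega>)" if "\<omega> < 1/8"
    unfolding convergent_scheme_def
  proof (intro allI impI)
    fix p :: "int \<Rightarrow> 'a" assume b: "bounded_diff p"
    define D where "D = delta p"
    have D0: "0 \<le> D" unfolding D_def using pb[OF b, of 0] zero_le_dist order_trans by blast
    have mu: "0 \<le> \<mu>" "\<mu> < 1" using w that unfolding \<mu>_def by auto
    define f where "f k t = PG M k ((scheme M \<omega> ^^ k) p) t" for k t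
    have st: "dist (f k t) (f (Suc k) t) \<le> (3 * D) * \<mu>^k" for k t
    proof -
      have "dist (f k t) (f (Suc k) t) \<le> \<mu>^k * D + 2 * (\<mu>^Suc k * D)"
        unfolding f_def funpow.simps o_apply
        by (rule PG_bound[OF w ga]) (use it[OF b, of k] it[OF b, of "Suc k"] D_def in auto)
      also have "\<dots> \<le> \<mu>^k * D + 2 * (\<mu>^k * D)"
      proof -
        have "\<mu> * (\<mu>^k * D) \<le> 1 * (\<mu>^k * D)"
          using mu D0 by (intro mult_right_mono) auto
        then show ?thesis by (simp add: ac_simps)
      qed
      finally show ?thesis by (simp add: algebra_simps)
    qed
    have "\<exists>F. \<forall>\<epsilon>>0. \<exists>K. \<forall>k\<ge>K. \<forall>t. dist (f k t) (F t) < \<epsilon>"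
      by (rule geo_unif[OF mu _ st]) (use D0 in simp)
    then show "\<exists>F. \<forall>\<epsilon>>0. \<exists>K. \<forall>k\<ge>K. \<forall>t. dist (PG M k ((scheme M \<omega> ^^ k) p) t) (F t) < \<epsilon>"
      unfolding f_def .
  qed
  show ?thesis using P1 P2 by auto
qed

end
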